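(* Let $d,r$ be integers with $d\ge1$ and $1\le r\le\binom{m+d}{d}-r_d$. Then $d_r(\mathrm{PRM}_q(d,m))=\mathsf{p}_m-\overline{e}_r(d,m)$.
   Context: $q$ is a prime power, $\mathbb{F}_q$ the finite field with $q$ elements, $m$ a positive integer, $\mathsf{p}_m=q^m+\dots+q+1=|\mathbb{P}^m(\mathbb{F}_q)|$. A monomial $\mu\neq1$ in $x_0,\dots,x_m$ written $x_0^{a_0}\cdots x_k^{a_k}$ with $a_k>0$ is projectively reduced if $a_0,\dots,a_{k-1}\le q-1$; $1$ is projectively reduced; a polynomial is projectively reduced if it is a linear combination of projectively reduced monomials. $r_d$ is the dimension of the degree-$d$ component of the ideal generated by $\{x_i^qx_j-x_ix_j^q:0\le i<j\le m\}$; $\binom{m+d}{d}-r_d=\dim\mathrm{PRM}_q(d,m)$. $\overline{e}_r(d,m)$ is the maximum number of points of $\mathbb{P}^m(\mathbb{F}_q)$ at which $G_1,\dots,G_r$ all vanish, over families of $r$ linearly independent projectively reduced homogeneous polynomials of degree $d$. Fix representatives $P_1,\dots,P_{\mathsf{p}_m}\in\mathbb{F}_q^{m+1}$ of the points of $\mathbb{P}^m(\mathbb{F}_q)$; $\mathrm{PRM}_q(d,m)$ is the image of the homogeneous degree-$d$ polynomials under $F\mapsto(F(P_1),\dots,F(P_{\mathsf{p}_m}))$. For a linear code $C$ and $1\le r\le\dim C$, $d_r(C)=\min\{|\mathrm{Supp}(D)|:D\subseteq C\text{ subspace},\dim D=r\}$, with $\mathrm{Supp}(D)$ the set of coordinates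 where some element of $D$ is nonzero. *)

theory Defs
  imports Complex_Main "HOL-Library.Function_Algebras" "HOL-Library.Cardinality"
begin

definition fscale :: "'a::field \<Rightarrow> ('b \<Rightarrow> 'a) \<Rightarrow> ('b \<Rightarrow> 'a)" where
  "fscale c f = (\<lambda>x. c * f x)"

lemma vector_space_fscale: "vector_space (fscale :: 'a::field \<Rightarrow> ('b \<Rightarrow> 'a) \<Rightarrow> _)"
  unfolding vector_space_def by (auto simp: fscale_def fun_eq_iff algebra_simps)

text \<open>Exponent vectors are functions nat => nat; a polynomial is its coefficient
  function (exponent vector => coefficient).\<close>

definition monos_deg :: "nat \<Rightarrow> nat \<Rightarrow> (nat \<Rightarrow> nat) set" where
  "monos_deg m d = {a. (\<forall>i>m. a i = 0) \<and> (\<Sum>i\<le>m. a i) = d}"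

definition hom_polys :: "nat \<Rightarrow> nat \<Rightarrow> ((nat \<Rightarrow> nat) \<Rightarrow> 'a::field) set" where
  "hom_polys m d = {F. \<forall>a. F a \<noteq> 0 \<longrightarrow> a \<in> monos_deg m d}"

definition eval_poly :: "nat \<Rightarrow> ((nat \<Rightarrow> nat) \<Rightarrow> 'a::field) \<Rightarrow> (nat \<Rightarrow> 'a) \<Rightarrow> 'a" where
  "eval_poly m F v = (\<Sum>a\<in>{a. F a \<noteq> 0}. F a * (\<Prod>i\<le>m. v i ^ a i))"

definition proj_reduced_mono :: "nat \<Rightarrow> nat \<Rightarrow> (nat \<Rightarrow> nat) \<Rightarrow> bool" where
  "proj_reduced_mono q m a \<longleftrightarrow> (a = (\<lambda>_. 0)) \<or>
     (\<exists>k\<le>m. a k > 0 \<and> (\<forall>i>k. a i = 0) \<and> (\<forall>i<k. a i \<le> q - 1))"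

definition PR_hom_polys :: "nat \<Rightarrow> nat \<Rightarrow> ((nat \<Rightarrow> nat) \<Rightarrow> 'a::{finite,field}) set" where
  "PR_hom_polys m d = {F \<in> hom_polys m d. \<forall>a. F a \<noteq> 0 \<longrightarrow> proj_reduced_mono CARD('a) m a}"

definition mono_poly :: "(nat \<Rightarrow> nat) \<Rightarrow> ((nat \<Rightarrow> nat) \<Rightarrow> 'a::field)" where
  "mono_poly a = (\<lambda>b. if b = a then 1 else 0)"

definition unit_exp :: "nat \<Rightarrow> nat \<Rightarrow> nat" where
  "unit_exp i = (\<lambda>k. if k = i then 1 else 0)"

text \<open>The polynomial x^b * (x_i^q x_j - x_i x_j^q).\<close>
definition gen_mult :: "nat \<Rightarrow> (nat \<Rightarrow> nat) \<Rightarrow> nat \<Rightarrow> nat \<Rightarrow> ((nat \<Rightarrow> nat) \<Rightarrow> 'a::field)" where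
  "gen_mult q b i j =
     mono_poly (\<lambda>k. b k + q * unit_exp i k + unit_exp j k)
     - mono_poly (\<lambda>k. b k + unit_exp i k + q * unit_exp j k)"

text \<open>Degree-d component of the ideal generated by the homogeneous polynomials
  x_i^q x_j - x_i x_j^q (0 <= i < j <= m): the span of their monomial multiples of degree d.\<close>
definition ideal_deg :: "nat \<Rightarrow> nat \<Rightarrow> ((nat \<Rightarrow> nat) \<Rightarrow> 'a::{finite,field}) set" where
  "ideal_deg m d = module.span fscale
     {gen_mult CARD('a) b i j | b i j. i < j \<and> j \<le> m \<and> CARD('a) + 1 \<le> d
                                   \<and> b \<in> monos_deg m (d - (CARD('a) + 1))}"

definition r_d :: "'a::{finite,field} itself \<Rightarrow> nat \<Rightarrow> nat \<Rightarrow> nat" where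
  "r_d TYPE('a) m d = vector_space.dim (fscale :: 'a \<Rightarrow> _) (ideal_deg m d :: ((nat \<Rightarrow> nat) \<Rightarrow> 'a) set)"

definition aff_vecs :: "nat \<Rightarrow> (nat \<Rightarrow> 'a::field) set" where
  "aff_vecs m = {v. \<forall>i>m. v i = 0}"

text \<open>The point of P^m spanned by a nonzero vector: the line through it.\<close>
definition proj_line :: "(nat \<Rightarrow> 'a::field) \<Rightarrow> (nat \<Rightarrow> 'a) set" where
  "proj_line v = {fscale c v | c. True}"

definition proj_points :: "nat \<Rightarrow> (nat \<Rightarrow> 'a::field) set set" where
  "proj_points m = {proj_line v | v. v \<in> aff_vecs m \<and> v \<noteq> 0}"

definition rep_system :: "nat \<Rightarrow> (nat \<Rightarrow> 'a::field) set \<Rightarrow> bool" where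
  "rep_system m R \<longleftrightarrow> R \<subseteq> aff_vecs m - {0} \<and> bij_betw proj_line R (proj_points m)"

definition p_m :: "nat \<Rightarrow> nat \<Rightarrow> nat" where
  "p_m q m = (\<Sum>i\<le>m. q ^ i)"

definition PRM :: "nat \<Rightarrow> nat \<Rightarrow> (nat \<Rightarrow> 'a::{finite,field}) set \<Rightarrow> ((nat \<Rightarrow> 'a) \<Rightarrow> 'a) set" where
  "PRM d m R = {(\<lambda>P. if P \<in> R then eval_poly m F P else 0) | F. F \<in> hom_polys m d}"

definition Supp :: "('b \<Rightarrow> 'a::zero) set \<Rightarrow> 'b set" where
  "Supp D = {x. \<exists>c\<in>D. c x \<noteq> 0}"

definition gen_hamming_weight :: "('b \<Rightarrow> 'a::field) set \<Rightarrow> nat \<Rightarrow> nat" where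
  "gen_hamming_weight C r = Min {card (Supp D) | D. D \<subseteq> C \<and> module.subspace fscale D
                                  \<and> vector_space.dim (fscale :: 'a \<Rightarrow> _) D = r}"

definition e_bar :: "'a::{finite,field} itself \<Rightarrow> nat \<Rightarrow> nat \<Rightarrow> nat \<Rightarrow> nat" where
  "e_bar TYPE('a) r d m = Max {card {L \<in> (proj_points m :: (nat \<Rightarrow> 'a) set set).
                                      \<forall>G\<in>Gs. \<forall>v\<in>L. eval_poly m G v = 0}
                               | Gs. Gs \<subseteq> (PR_hom_polys m d :: ((nat \<Rightarrow> nat) \<Rightarrow> 'a) set)
                                     \<and> card Gs = r \<and> \<not> module.dependent (fscale :: 'a \<Rightarrow> _) Gs}"

end

theory Submission
  imports Defs "HOL-Computational_Algebra.Polynomial" "HOL-Library.Multiset" "HOL-Library.FuncSet"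
begin

interpretation VS: vector_space "fscale :: 'a::field \<Rightarrow> ('b \<Rightarrow> 'a) \<Rightarrow> ('b \<Rightarrow> 'a)"
  by (rule vector_space_fscale)

interpretation VP: vector_space_pair "fscale :: 'a::field \<Rightarrow> ('b \<Rightarrow> 'a) \<Rightarrow> ('b \<Rightarrow> 'a)"
   "fscale :: 'a::field \<Rightarrow> ('c \<Rightarrow> 'a) \<Rightarrow> ('c \<Rightarrow> 'a)"
  by unfold_locales

lemma fscale_apply[simp]: "fscale c f x = c * f x"
  by (simp add: fscale_def)

lemma frob: "(x::'a::{finite,field}) ^ CARD('a) = x"
proof (cases "x = 0")
  case True then show ?thesis by (simp add: zero_power)
next
  case False
  let ?N = "UNIV - {0::'a}"
  have bij: "bij_betw (\<lambda>y. x * y) ?N ?N"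
    using False by (auto simp: bij_betw_def inj_on_def intro!: image_eqI[where x="y / x" for y])
  have "(\<Prod>y\<in>?N. x * y) = (\<Prod>y\<in>?N. y)"
    using prod.reindex_bij_betw[OF bij, of "\<lambda>y. y"] by simp
  moreover have "(\<Prod>y\<in>?N. x * y) = x ^ card ?N * (\<Prod>y\<in>?N. y)"
    by (simp add: prod.distrib)
  moreover have "(\<Prod>y\<in>?N. y) \<noteq> 0" by simp
  ultimately have "x ^ card ?N = 1" by simp
  moreover have "card ?N = CARD('a) - 1" by (simp add: card_Diff_singleton)
  moreover have "CARD('a) \<ge> 1" by (simp add: Suc_leI)
  ultimately show ?thesis
    by (metis One_nat_def Suc_diff_1 less_le_trans mult.right_neutral power_Suc zero_less_one)
qed

lemma card_field_ge2: "CARD('a::{finite,field}) \<ge> 2"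
proof -
  have "{0::'a, 1} \<subseteq> UNIV" by simp
  then have "card {0::'a,1} \<le> CARD('a)" by (rule card_mono[OF finite])
  then show ?thesis by simp
qed


definition ext0 :: "nat \<Rightarrow> (nat \<Rightarrow> 'b) \<Rightarrow> nat \<Rightarrow> 'b::zero" where
  "ext0 m f = (\<lambda>i. if i \<le> m then f i else 0)"

lemma finite_monos: "finite (monos_deg m d)"
proof -
  have "monos_deg m d \<subseteq> ext0 m ` PiE {..m} (\<lambda>_. {..d})"
  proof
    fix a assume a: "a \<in> monos_deg m d"
    have le: "a i \<le> d" if "i \<le> m" for i
    proof -
      have "a i \<le> (\<Sum>j\<le>m. a j)" using that by (intro member_le_sum) auto
      then show ?thesis using a by (simp add: monos_deg_def)
    qed
    have "a = ext0 m (restrict a {..m})"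
      using a by (auto simp: ext0_def monos_deg_def fun_eq_iff restrict_apply)
    moreover have "restrict a {..m} \<in> PiE {..m} (\<lambda>_. {..d})" using le by auto
    ultimately show "a \<in> ext0 m ` PiE {..m} (\<lambda>_. {..d})" by (rule image_eqI)
  qed
  moreover have "finite (PiE {..m} (\<lambda>_. {..d::nat}))" by (intro finite_PiE) auto
  ultimately show ?thesis by (rule finite_subset[OF _ finite_imageI])
qed

definition mon :: "nat \<Rightarrow> (nat \<Rightarrow> nat) \<Rightarrow> (nat \<Rightarrow> 'a::field) \<Rightarrow> 'a" where
  "mon m a v = (\<Prod>i\<le>m. v i ^ a i)"

definition evh :: "nat \<Rightarrow> nat \<Rightarrow> ((nat \<Rightarrow> nat) \<Rightarrow> 'a::field) \<Rightarrow> (nat \<Rightarrow> 'a) \<Rightarrow> 'a" where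
  "evh m d F v = (\<Sum>a\<in>monos_deg m d. F a * mon m a v)"

lemma eval_poly_hom: "F \<in> hom_polys m d \<Longrightarrow> eval_poly m F v = evh m d F v"
  unfolding eval_poly_def evh_def mon_def
  by (rule sum.mono_neutral_left) (auto simp: hom_polys_def finite_monos)

lemma evh_add: "evh m d (F + G) v = evh m d F v + evh m d G v"
  by (simp add: evh_def algebra_simps sum.distrib)

lemma evh_scale: "evh m d (fscale c F) v = c * evh m d F v"
  by (simp add: evh_def sum_distrib_left mult.assoc)

lemma evh_zero[simp]: "evh m d 0 v = 0"
  by (simp add: evh_def)

lemma evh_diff: "evh m d (F - G) v = evh m d F v - evh m d G v"
  by (simp add: evh_def algebra_simps sum_subtractf)

lemma nz_add: "x + y \<noteq> (0::'a::monoid_add) \<Longrightarrow> x \<noteq> 0 \<or> y \<noteq> 0"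
  by auto

lemma subspace_hom: "VS.subspace (hom_polys m d :: ((nat \<Rightarrow> nat) \<Rightarrow> 'a::field) set)"
proof (rule VS.subspaceI)
  show "0 \<in> hom_polys m d" by (simp add: hom_polys_def)
next
  fix x y :: "(nat \<Rightarrow> nat) \<Rightarrow> 'a" assume "x \<in> hom_polys m d" "y \<in> hom_polys m d"
  then show "x + y \<in> hom_polys m d" unfolding hom_polys_def
    using nz_add by fastforce
next
  fix c and x :: "(nat \<Rightarrow> nat) \<Rightarrow> 'a" assume "x \<in> hom_polys m d"
  then show "fscale c x \<in> hom_polys m d" unfolding hom_polys_def by simp
qed

lemma subspace_PR: "VS.subspace (PR_hom_polys m d :: ((nat \<Rightarrow> nat) \<Rightarrow> 'a::{finite,field}) set)"
proof (rule VS.subspaceI)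
  show "0 \<in> PR_hom_polys m d" by (simp add: hom_polys_def PR_hom_polys_def)
next
  fix x y :: "(nat \<Rightarrow> nat) \<Rightarrow> 'a" assume "x \<in> PR_hom_polys m d" "y \<in> PR_hom_polys m d"
  then show "x + y \<in> PR_hom_polys m d" unfolding PR_hom_polys_def
    using VS.subspace_add[OF subspace_hom] nz_add by fastforce
next
  fix c and x :: "(nat \<Rightarrow> nat) \<Rightarrow> 'a" assume "x \<in> PR_hom_polys m d"
  then show "fscale c x \<in> PR_hom_polys m d"
    unfolding PR_hom_polys_def using VS.subspace_scale[OF subspace_hom] by auto
qed

lemma PR_sub_hom: "PR_hom_polys m d \<subseteq> hom_polys m d"
  by (auto simp: PR_hom_polys_def)

lemma finite_hom: "finite (hom_polys m d :: ((nat \<Rightarrow> nat) \<Rightarrow> 'a::{finite,field}) set)"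
proof -
  let ?S = "monos_deg m d"
  let ?e = "\<lambda>f::(nat\<Rightarrow>nat) \<Rightarrow> 'a. \<lambda>a. if a \<in> ?S then f a else 0"
  have "hom_polys m d \<subseteq> ?e ` PiE ?S (\<lambda>_. UNIV)"
  proof
    fix F :: "(nat \<Rightarrow> nat) \<Rightarrow> 'a" assume F: "F \<in> hom_polys m d"
    have eq: "F = ?e (restrict F ?S)" using F by (auto simp: hom_polys_def fun_eq_iff restrict_apply)
    show "F \<in> ?e ` PiE ?S (\<lambda>_. UNIV)" by (rule image_eqI[where f="?e" and x="restrict F ?S", OF eq]) simp
  qed
  moreover have "finite (PiE ?S (\<lambda>_. UNIV :: 'a set))" by (intro finite_PiE finite_monos) auto
  ultimately show ?thesis by (rule finite_subset[OF _ finite_imageI])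
qed

lemma evh_homog: "evh m d F (fscale c v) = c ^ d * evh m d F v"
proof -
  have "mon m a (fscale c v) = c ^ d * mon m a v" if "a \<in> monos_deg m d" for a
  proof -
    have "mon m a (fscale c v) = (\<Prod>i\<le>m. c ^ a i) * mon m a v"
      by (simp add: mon_def power_mult_distrib prod.distrib)
    also have "(\<Prod>i\<le>m. c ^ a i) = c ^ d"
      using that by (simp add: power_sum[symmetric] monos_deg_def)
    finally show ?thesis .
  qed
  then show ?thesis
    by (simp add: evh_def sum_distrib_left mult.left_commute)
qed

lemma evh_at0: "d \<ge> 1 \<Longrightarrow> evh m d F 0 = 0"
  using evh_homog[of m d F 0 0] by (simp add: fscale_def zero_power zero_fun_def)


lemma sum_fun_apply: "(sum f A) x = (\<Sum>a\<in>A. f a x)"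
  by (induct A rule: infinite_finite_induct) auto

lemma mon_add: "mon m (\<lambda>t. a t + b t) v = mon m a v * mon m b v"
  by (simp add: mon_def power_add prod.distrib)

lemma mon_unit: "i \<le> m \<Longrightarrow> mon m (\<lambda>t. c * unit_exp i t) v = v i ^ c"
proof -
  assume i: "i \<le> m"
  have "mon m (\<lambda>t. c * unit_exp i t) v = (\<Prod>t\<le>m. if t = i then v i ^ c else 1)"
    unfolding mon_def by (intro prod.cong) (auto simp: unit_exp_def)
  also have "\<dots> = v i ^ c" using i by (simp add: prod.delta)
  finally show ?thesis .
qed

lemma evh_mono: "evh m d (mono_poly a) v = (if a \<in> monos_deg m d then mon m a v else 0)"
  unfolding evh_def mono_poly_def
  by (simp add: if_distrib[of "\<lambda>x. x * _"] sum.delta[OF finite_monos] cong: if_cong)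

lemma sum_unit: "i \<le> m \<Longrightarrow> (\<Sum>t\<le>m. unit_exp i t * f t) = (f i :: nat)"
proof -
  assume "i \<le> m"
  have "(\<Sum>t\<le>m. unit_exp i t * f t) = (\<Sum>t\<le>m. if t = i then f i else 0)"
    by (intro sum.cong) (auto simp: unit_exp_def)
  then show ?thesis using \<open>i \<le> m\<close> by (simp add: sum.delta)
qed

lemma sum_unit1: "i \<le> m \<Longrightarrow> (\<Sum>t\<le>m. unit_exp i t) = (1::nat)"
  using sum_unit[of i m "\<lambda>_. 1"] by simp

lemma monos_shift:
  assumes b: "b \<in> monos_deg m e" and ij: "i \<le> m" "j \<le> m"
  shows "(\<lambda>t. b t + c1 * unit_exp i t + c2 * unit_exp j t) \<in> monos_deg m (e + c1 + c2)"
proof -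
  have "(\<Sum>t\<le>m. b t + c1 * unit_exp i t + c2 * unit_exp j t)
      = (\<Sum>t\<le>m. b t) + c1 * (\<Sum>t\<le>m. unit_exp i t) + c2 * (\<Sum>t\<le>m. unit_exp j t)"
    by (simp add: sum.distrib sum_distrib_left)
  also have "\<dots> = e + c1 + c2" using b ij by (simp add: sum_unit1 monos_deg_def)
  finally show ?thesis using b ij by (auto simp: monos_deg_def unit_exp_def)
qed

lemma gen_monos:
  assumes "i < j" "j \<le> m" "CARD('a::{finite,field}) + 1 \<le> d" "b \<in> monos_deg m (d - (CARD('a) + 1))"
  shows "(\<lambda>t. b t + CARD('a) * unit_exp i t + unit_exp j t) \<in> monos_deg m d"
    "(\<lambda>t. b t + unit_exp i t + CARD('a) * unit_exp j t) \<in> monos_deg m d"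
proof -
  let ?q = "CARD('a)"
  have d: "d = d - (?q + 1) + ?q + 1" using assms by simp
  show "(\<lambda>t. b t + ?q * unit_exp i t + unit_exp j t) \<in> monos_deg m d"
    using monos_shift[OF assms(4), of i j ?q 1] assms d by simp
  show "(\<lambda>t. b t + unit_exp i t + ?q * unit_exp j t) \<in> monos_deg m d"
    using monos_shift[OF assms(4), of i j 1 ?q] assms d by (simp add: add.commute add.left_commute)
qed

lemma gen_mult_hom:
  assumes "i < j" "j \<le> m" "CARD('a) + 1 \<le> d" "b \<in> monos_deg m (d - (CARD('a) + 1))"
  shows "(gen_mult CARD('a) b i j :: (nat \<Rightarrow> nat) \<Rightarrow> 'a::{finite,field}) \<in> hom_polys m d"
  using gen_monos[OF assms] unfolding gen_mult_def hom_polys_def mono_poly_def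
  by auto

lemma gen_mult_vanish:
  assumes "i < j" "j \<le> m" "CARD('a) + 1 \<le> d" "b \<in> monos_deg m (d - (CARD('a) + 1))"
  shows "evh m d (gen_mult CARD('a) b i j :: (nat \<Rightarrow> nat) \<Rightarrow> 'a::{finite,field}) v = 0"
proof -
  let ?q = "CARD('a)"
  have "mon m (\<lambda>t. b t + ?q * unit_exp i t + unit_exp j t) v
        = mon m b v * v i ^ ?q * v j"
    using mon_add[of m "\<lambda>t. b t + ?q * unit_exp i t" "unit_exp j" v]
      mon_add[of m b "\<lambda>t. ?q * unit_exp i t" v] mon_unit[of i m ?q v] mon_unit[of j m 1 v] assms
    by simp
  moreover have "mon m (\<lambda>t. b t + unit_exp i t + ?q * unit_exp j t) v
        = mon m b v * v i * v j ^ ?q"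
    using mon_add[of m "\<lambda>t. b t + unit_exp i t" "\<lambda>t. ?q * unit_exp j t" v]
      mon_add[of m b "unit_exp i" v] mon_unit[of i m 1 v] mon_unit[of j m ?q v] assms
    by simp
  ultimately show ?thesis
    using gen_monos[OF assms] unfolding gen_mult_def evh_diff evh_mono by (auto simp: frob)
qed

definition gens :: "nat \<Rightarrow> nat \<Rightarrow> ((nat \<Rightarrow> nat) \<Rightarrow> 'a::{finite,field}) set" where
  "gens m d = {gen_mult CARD('a) b i j | b i j. i < j \<and> j \<le> m \<and> CARD('a) + 1 \<le> d
                                   \<and> b \<in> monos_deg m (d - (CARD('a) + 1))}"

lemma ideal_deg_span: "ideal_deg m d = VS.span (gens m d)"
  unfolding ideal_deg_def gens_def by simp

lemma ideal_sub: "ideal_deg m d \<subseteq> {F \<in> hom_polys m d. \<forall>v. evh m d F v = 0}"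
proof -
  have sub: "VS.subspace {F \<in> hom_polys m d. \<forall>v. evh m d F v = (0::'a::{finite,field})}"
    using subspace_hom[of m d]
    unfolding VS.subspace_def by (auto simp: evh_add evh_scale)
  have "gens m d \<subseteq> {F \<in> hom_polys m d. \<forall>v. evh m d F v = (0::'a)}"
    unfolding gens_def using gen_mult_hom gen_mult_vanish by blast
  then show ?thesis unfolding ideal_deg_span by (rule VS.span_minimal[OF _ sub])
qed


definition phi :: "nat \<Rightarrow> (nat \<Rightarrow> nat) \<Rightarrow> nat" where
  "phi m a = (\<Sum>t\<le>m. a t * (m - t))"

lemma phi_shift:
  assumes "i \<le> m" "k \<le> m"
  shows "phi m (\<lambda>t. b t + c1 * unit_exp i t + c2 * unit_exp k t) = phi m b + c1 * (m - i) + c2 * (m - k)"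
proof -
  have "phi m (\<lambda>t. b t + c1 * unit_exp i t + c2 * unit_exp k t)
     = phi m b + c1 * (\<Sum>t\<le>m. unit_exp i t * (m - t)) + c2 * (\<Sum>t\<le>m. unit_exp k t * (m - t))"
    unfolding phi_def by (simp add: add_mult_distrib sum.distrib sum_distrib_left mult.assoc)
  then show ?thesis using assms by (simp add: sum_unit)
qed

lemma mono_PR:
  assumes "a \<in> monos_deg m d" "proj_reduced_mono CARD('a) m a"
  shows "(mono_poly a :: (nat \<Rightarrow> nat) \<Rightarrow> 'a::{finite,field}) \<in> PR_hom_polys m d"
  using assms unfolding PR_hom_polys_def hom_polys_def mono_poly_def by auto

lemma reduce:
  assumes "a \<in> monos_deg m d"
  shows "\<exists>I\<in>ideal_deg m d. (mono_poly a :: (nat \<Rightarrow> nat) \<Rightarrow> 'a::{finite,field}) - I \<in> PR_hom_polys m d"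
  using assms
proof (induction "phi m a" arbitrary: a rule: less_induct)
  case less
  let ?q = "CARD('a)"
  have q2: "?q \<ge> 2" by (rule card_field_ge2)
  show ?case
  proof (cases "proj_reduced_mono ?q m a")
    case True
    have "(0::(nat \<Rightarrow> nat) \<Rightarrow> 'a) \<in> ideal_deg m d" unfolding ideal_deg_span by (rule VS.span_zero)
    then show ?thesis using mono_PR[OF less.prems True] by (intro bexI[of _ 0]) auto
  next
    case False
    have am: "a t = 0" if "t > m" for t using less.prems that by (auto simp: monos_deg_def)
    have "a \<noteq> (\<lambda>_. 0)" using False by (auto simp: proj_reduced_mono_def)
    then obtain t0 where t0: "a t0 > 0" by auto
    have t0m: "t0 \<le> m"
    proof (rule ccontr)
      assume "\<not> t0 \<le> m" then have "a t0 = 0" using am by simp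
      then show False using t0 by simp
    qed
    define K where "K = {t. t \<le> m \<and> a t > 0}"
    have finK: "finite K" unfolding K_def by auto
    have "t0 \<in> K" using t0 t0m by (simp add: K_def)
    define k where "k = Max K"
    have "k \<in> K" unfolding k_def using finK \<open>t0 \<in> K\<close> by (intro Max_in) auto
    then have km: "k \<le> m" and ak: "a k > 0" by (auto simp: K_def)
    have above: "a t = 0" if "t > k" for t
    proof (rule ccontr)
      assume "a t \<noteq> 0"
      then have "t \<le> m" using am by (meson not_le)
      with \<open>a t \<noteq> 0\<close> have "t \<in> K" by (simp add: K_def)
      then have "t \<le> k" unfolding k_def using finK by simp
      with that show False by simp
    qed
    have "\<not> (\<forall>i<k. a i \<le> ?q - 1)"
    proof
      assume "\<forall>i<k. a i \<le> ?q - 1"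
      then have "proj_reduced_mono ?q m a" using km ak above unfolding proj_reduced_mono_def by blast
      then show False using False by simp
    qed
    then obtain i where ik: "i < k" and ai0: "\<not> a i \<le> ?q - 1" by blast
    have ai: "a i \<ge> ?q" using ai0 q2 by linarith
    define b where "b = (\<lambda>t. a t - ?q * unit_exp i t - unit_exp k t)"
    have ha: "(\<lambda>t. b t + ?q * unit_exp i t + 1 * unit_exp k t) = a"
      using ik ai ak by (auto simp: b_def unit_exp_def fun_eq_iff)
    have im: "i \<le> m" using ik km by simp
    have sb: "(\<Sum>t\<le>m. a t) = (\<Sum>t\<le>m. b t) + ?q + 1"
    proof -
      have "(\<Sum>t\<le>m. a t) = (\<Sum>t\<le>m. b t + ?q * unit_exp i t + 1 * unit_exp k t)"
        by (subst ha[symmetric]) simp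
      also have "\<dots> = (\<Sum>t\<le>m. b t) + ?q * (\<Sum>t\<le>m. unit_exp i t) + (\<Sum>t\<le>m. unit_exp k t)"
        by (simp add: sum.distrib sum_distrib_left)
      also have "\<dots> = (\<Sum>t\<le>m. b t) + ?q + 1" using im km by (simp add: sum_unit1)
      finally show ?thesis .
    qed
    have dq: "?q + 1 \<le> d" using sb less.prems by (simp add: monos_deg_def)
    have bm: "b \<in> monos_deg m (d - (?q + 1))"
      using sb less.prems am by (auto simp: monos_deg_def b_def)
    define a2 where "a2 = (\<lambda>t. b t + unit_exp i t + ?q * unit_exp k t)"
    have a2m: "a2 \<in> monos_deg m d" unfolding a2_def by (rule gen_monos(2)[OF ik km dq bm])
    have hg: "(gen_mult ?q b i k :: (nat \<Rightarrow> nat) \<Rightarrow> 'a) = mono_poly a - mono_poly a2"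
      using ha unfolding gen_mult_def a2_def by simp
    have "phi m a2 < phi m a"
    proof -
      have e1: "phi m a = phi m b + ?q * (m - i) + 1 * (m - k)"
        using phi_shift[OF im km, of b ?q 1] ha by simp
      have e2: "phi m a2 = phi m b + 1 * (m - i) + ?q * (m - k)"
        using phi_shift[OF im km, of b 1 ?q] unfolding a2_def by simp
      obtain p where p: "?q = p + 2" using q2 by (metis add.commute le_Suc_ex)
      define x where "x = m - i"
      define y where "y = m - k"
      have lt: "y < x" using ik km by (simp add: x_def y_def)
      have "p * y + y < p * x + x" using lt by (intro add_le_less_mono mult_le_mono2) simp_all
      moreover have "phi m a = phi m b + p * x + 2 * x + y" using e1 p by (simp add: x_def y_def distrib_right)
      moreover have "phi m a2 = phi m b + x + p * y + 2 * y" using e2 p by (simp add: x_def y_def distrib_right)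
      ultimately show ?thesis by linarith
    qed
    then obtain I2 where I2: "I2 \<in> ideal_deg m d" "(mono_poly a2 :: (nat \<Rightarrow> nat) \<Rightarrow> 'a) - I2 \<in> PR_hom_polys m d"
      using less.hyps a2m by blast
    have gi: "(gen_mult ?q b i k :: (nat \<Rightarrow> nat) \<Rightarrow> 'a) \<in> ideal_deg m d"
      unfolding ideal_deg_span gens_def using ik km dq bm by (intro VS.span_base) blast
    have "gen_mult ?q b i k + I2 \<in> ideal_deg m d"
      using gi I2(1) unfolding ideal_deg_span by (rule VS.span_add)
    moreover have "mono_poly a - (gen_mult ?q b i k + I2) = (mono_poly a2 :: (nat \<Rightarrow> nat) \<Rightarrow> 'a) - I2"
      unfolding hg by simp
    ultimately show ?thesis using I2(2) by metis
  qed
qed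


lemma hom_span_monos: "hom_polys m d \<subseteq> VS.span (mono_poly ` monos_deg m d :: ((nat \<Rightarrow> nat) \<Rightarrow> 'a::field) set)"
proof
  fix F :: "(nat \<Rightarrow> nat) \<Rightarrow> 'a" assume F: "F \<in> hom_polys m d"
  have "F = (\<Sum>a\<in>monos_deg m d. fscale (F a) (mono_poly a))"
  proof
    fix x
    have "(\<Sum>a\<in>monos_deg m d. fscale (F a) (mono_poly a)) x = (\<Sum>a\<in>monos_deg m d. if a = x then F x else 0)"
      unfolding sum_fun_apply by (intro sum.cong) (auto simp: mono_poly_def)
    also have "\<dots> = F x" using F by (auto simp: sum.delta[OF finite_monos] hom_polys_def)
    finally show "F x = (\<Sum>a\<in>monos_deg m d. fscale (F a) (mono_poly a)) x" by simp
  qed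
  also have "\<dots> \<in> VS.span (mono_poly ` monos_deg m d)"
    by (intro VS.span_sum VS.span_scale VS.span_base) auto
  finally show "F \<in> VS.span (mono_poly ` monos_deg m d)" .
qed

lemma hom_decomp:
  assumes "F \<in> hom_polys m d"
  shows "\<exists>I\<in>ideal_deg m d. (F :: (nat \<Rightarrow> nat) \<Rightarrow> 'a::{finite,field}) - I \<in> PR_hom_polys m d"
proof -
  let ?W = "{F :: (nat \<Rightarrow> nat) \<Rightarrow> 'a. \<exists>I\<in>ideal_deg m d. F - I \<in> PR_hom_polys m d}"
  have sI: "VS.subspace (ideal_deg m d :: ((nat \<Rightarrow> nat) \<Rightarrow> 'a) set)"
    unfolding ideal_deg_span by simp
  have sW: "VS.subspace ?W"
  proof (rule VS.subspaceI)
    have "(0 :: (nat \<Rightarrow> nat) \<Rightarrow> 'a) - 0 \<in> PR_hom_polys m d"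
      using VS.subspace_0[OF subspace_PR] by simp
    then show "0 \<in> ?W" using VS.subspace_0[OF sI] by (intro CollectI bexI[of _ 0])
  next
    fix x y assume "x \<in> ?W" "y \<in> ?W"
    then obtain I J where IJ: "I \<in> ideal_deg m d" "x - I \<in> PR_hom_polys m d"
       "J \<in> ideal_deg m d" "y - J \<in> PR_hom_polys m d" by blast
    have "(x - I) + (y - J) \<in> PR_hom_polys m d" by (rule VS.subspace_add[OF subspace_PR IJ(2,4)])
    moreover have "(x - I) + (y - J) = (x + y) - (I + J)" by (simp add: algebra_simps)
    moreover have "I + J \<in> ideal_deg m d" by (rule VS.subspace_add[OF sI IJ(1,3)])
    ultimately have "(x + y) - (I + J) \<in> PR_hom_polys m d" by simp
    then show "x + y \<in> ?W" using \<open>I + J \<in> ideal_deg m d\<close> by blast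
  next
    fix c x assume "x \<in> ?W"
    then obtain I where I: "I \<in> ideal_deg m d" "x - I \<in> PR_hom_polys m d" by blast
    have m1: "fscale c (x - I) \<in> PR_hom_polys m d" by (rule VS.subspace_scale[OF subspace_PR I(2)])
    have eq: "fscale c x - fscale c I = fscale c (x - I)" by (simp add: fun_eq_iff algebra_simps)
    have m2: "fscale c I \<in> ideal_deg m d" by (rule VS.subspace_scale[OF sI I(1)])
    have "fscale c x - fscale c I \<in> PR_hom_polys m d" unfolding eq by (rule m1)
    then show "fscale c x \<in> ?W" using m2 by blast
  qed
  have "mono_poly ` monos_deg m d \<subseteq> ?W" using reduce by blast
  then have "VS.span (mono_poly ` monos_deg m d) \<subseteq> ?W" by (rule VS.span_minimal[OF _ sW])
  then show ?thesis using hom_span_monos assms by blast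
qed

lemma indep_monos: "VS.independent (mono_poly ` S :: ((nat \<Rightarrow> nat) \<Rightarrow> 'a::field) set)"
proof
  assume "VS.dependent (mono_poly ` S :: ((nat \<Rightarrow> nat) \<Rightarrow> 'a) set)"
  then obtain t u v where t: "finite t" "t \<subseteq> mono_poly ` S" "(\<Sum>w\<in>t. fscale (u w) w) = 0"
    "v \<in> t" "u v \<noteq> (0::'a)"
    unfolding VS.dependent_explicit by blast
  obtain a where a: "v = mono_poly a" using t by auto
  have "(\<Sum>w\<in>t. fscale (u w) w) a = (\<Sum>w\<in>t. if w = v then u v else 0)"
    unfolding sum_fun_apply
  proof (intro sum.cong refl)
    fix w assume "w \<in> t"
    then obtain b where b: "w = mono_poly b" using t by auto
    have va: "v a = 1" using a by (simp add: mono_poly_def)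
    have "w a = (if w = v then 1 else 0)"
    proof (cases "b = a")
      case True then show ?thesis using a b va by simp
    next
      case False
      then have "w a = 0" using b by (simp add: mono_poly_def)
      moreover then have "w \<noteq> v" using va by auto
      ultimately show ?thesis by simp
    qed
    then show "fscale (u w) w a = (if w = v then u v else 0)" by simp
  qed
  also have "\<dots> = u v" using t by simp
  finally show False using t by simp
qed

lemma inj_mono: "inj (mono_poly :: (nat \<Rightarrow> nat) \<Rightarrow> (nat \<Rightarrow> nat) \<Rightarrow> 'a::field)"
proof
  fix a b assume "(mono_poly a :: (nat \<Rightarrow> nat) \<Rightarrow> 'a) = mono_poly b"
  then have "(mono_poly a :: (nat \<Rightarrow> nat) \<Rightarrow> 'a) a = mono_poly b a" by simp
  then show "a = b" by (auto simp: mono_poly_def split: if_splits)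
qed

lemma card_monos: "card (monos_deg m d) = (m + d choose d)"
proof -
  have bij: "bij_betw count (multisets_of_size {..m} d) (monos_deg m d)"
  proof (rule bij_betw_imageI)
    show "inj_on count (multisets_of_size {..m} d)" by (auto simp: inj_on_def multiset_eqI)
  next
    show "count ` multisets_of_size {..m} d = monos_deg m d"
    proof
      show "count ` multisets_of_size {..m} d \<subseteq> monos_deg m d"
      proof
        fix f assume "f \<in> count ` multisets_of_size {..m} d"
        then obtain M where M: "set_mset M \<subseteq> {..m}" "size M = d" "f = count M"
          by (auto simp: multisets_of_size_def)
        have "size M = sum (count M) (set_mset M)" by (simp add: size_multiset_overloaded_eq)
        also have "\<dots> = sum (count M) {..m}"
          using M(1) by (intro sum.mono_neutral_left) (auto simp: not_in_iff)
        finally show "f \<in> monos_deg m d" using M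
          by (auto simp: monos_deg_def not_in_iff[symmetric])
      qed
    next
      show "monos_deg m d \<subseteq> count ` multisets_of_size {..m} d"
      proof
        fix a assume a: "a \<in> monos_deg m d"
        define M where "M = (\<Sum>i\<le>m. replicate_mset (a i) i)"
        have cM: "count M = a"
        proof
          fix j
          have "count M j = (\<Sum>i\<le>m. if i = j then a j else 0)"
            unfolding M_def count_sum by (intro sum.cong) auto
          also have "\<dots> = a j" using a by (auto simp: monos_deg_def)
          finally show "count M j = a j" .
        qed
        have "size M = d" using a by (simp add: M_def monos_deg_def)
        moreover have "set_mset M \<subseteq> {..m}"
        proof
          fix x assume "x \<in># M"
          then have "a x > 0" using cM by (metis count_greater_zero_iff)
          show "x \<in> {..m}"
          proof (rule ccontr)
            assume "x \<notin> {..m}" then have "a x = 0" using a by (simp add: monos_deg_def)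
            with \<open>a x > 0\<close> show False by simp
          qed
        qed
        ultimately have "M \<in> multisets_of_size {..m} d" by (simp add: multisets_of_size_def)
        then show "a \<in> count ` multisets_of_size {..m} d" by (rule image_eqI[where f=count, OF cM[symmetric]])
      qed
    qed
  qed
  have "card (monos_deg m d) = card (multisets_of_size {..m} d)"
    using bij_betw_same_card[OF bij] by simp
  also have "\<dots> = (m + d choose d)" by (simp add: card_multisets_of_size)
  finally show ?thesis .
qed

lemma dim_union_le:
  assumes "finite A" "finite B"
  shows "VS.dim (A \<union> B :: ('b \<Rightarrow> 'a::field) set) \<le> VS.dim A + VS.dim B"
proof -
  obtain BA where BA: "BA \<subseteq> A" "VS.independent BA" "A \<subseteq> VS.span BA" "card BA = VS.dim A"
    by (rule VS.basis_exists)
  obtain BB where BB: "BB \<subseteq> B" "VS.independent BB" "B \<subseteq> VS.span BB" "card BB = VS.dim B"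
    by (rule VS.basis_exists)
  have fin: "finite (BA \<union> BB)" using BA BB assms by (meson finite_Un finite_subset)
  have "A \<union> B \<subseteq> VS.span (BA \<union> BB)"
    using BA(3) BB(3) VS.span_mono[of BA "BA \<union> BB"] VS.span_mono[of BB "BA \<union> BB"] by blast
  then have "VS.dim (A \<union> B) \<le> card (BA \<union> BB)" using fin by (rule VS.dim_le_card)
  also have "\<dots> \<le> card BA + card BB" by (rule card_Un_le)
  finally show ?thesis using BA BB by simp
qed

lemma dim_mono_fin:
  assumes "V \<subseteq> VS.span W" "finite W"
  shows "VS.dim (V :: ('b \<Rightarrow> 'a::field) set) \<le> VS.dim W"
proof -
  obtain BW where BW: "BW \<subseteq> W" "VS.independent BW" "W \<subseteq> VS.span BW" "card BW = VS.dim W"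
    by (rule VS.basis_exists)
  have "VS.span W \<subseteq> VS.span BW" using BW(3) by (metis VS.span_mono VS.span_span)
  then have "V \<subseteq> VS.span BW" using assms(1) by blast
  moreover have "finite BW" using BW(1) assms(2) by (rule finite_subset)
  ultimately have "VS.dim V \<le> card BW" by (rule VS.dim_le_card)
  then show ?thesis using BW by simp
qed

lemma dim_PR_ge:
  "(m + d choose d) \<le> r_d TYPE('a) m d + VS.dim (PR_hom_polys m d :: ((nat \<Rightarrow> nat) \<Rightarrow> 'a::{finite,field}) set)"
proof -
  let ?I = "ideal_deg m d :: ((nat \<Rightarrow> nat) \<Rightarrow> 'a) set"
  let ?P = "PR_hom_polys m d :: ((nat \<Rightarrow> nat) \<Rightarrow> 'a) set"
  have "?I \<subseteq> hom_polys m d" using ideal_sub[of m d] by auto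
  then have finI: "finite ?I" using finite_hom by (rule finite_subset)
  have finP: "finite ?P" using PR_sub_hom finite_hom by (rule finite_subset)
  have "hom_polys m d \<subseteq> VS.span (?I \<union> ?P)"
  proof
    fix F :: "(nat \<Rightarrow> nat) \<Rightarrow> 'a" assume "F \<in> hom_polys m d"
    then obtain I where I: "I \<in> ?I" "F - I \<in> ?P" using hom_decomp by blast
    have "I + (F - I) \<in> VS.span (?I \<union> ?P)"
      using I by (intro VS.span_add VS.span_base) auto
    then show "F \<in> VS.span (?I \<union> ?P)" by simp
  qed
  moreover have "mono_poly ` monos_deg m d \<subseteq> (hom_polys m d :: ((nat \<Rightarrow> nat) \<Rightarrow> 'a) set)"
    by (auto simp: hom_polys_def mono_poly_def split: if_splits)
  ultimately have "mono_poly ` monos_deg m d \<subseteq> VS.span (?I \<union> ?P)" by blast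
  then have "VS.dim (mono_poly ` monos_deg m d :: ((nat \<Rightarrow> nat) \<Rightarrow> 'a) set) \<le> VS.dim (?I \<union> ?P)"
    by (rule dim_mono_fin) (use finI finP in simp)
  also have "\<dots> \<le> VS.dim ?I + VS.dim ?P" using finI finP by (rule dim_union_le)
  finally have "VS.dim (mono_poly ` monos_deg m d :: ((nat \<Rightarrow> nat) \<Rightarrow> 'a) set) \<le> VS.dim ?I + VS.dim ?P" .
  moreover have "VS.dim (mono_poly ` monos_deg m d :: ((nat \<Rightarrow> nat) \<Rightarrow> 'a) set)
     = card (mono_poly ` monos_deg m d :: ((nat \<Rightarrow> nat) \<Rightarrow> 'a) set)"
    by (rule VS.dim_eq_card_independent[OF indep_monos])
  moreover have "card (mono_poly ` monos_deg m d :: ((nat \<Rightarrow> nat) \<Rightarrow> 'a) set) = card (monos_deg m d)"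
    by (rule card_image[OF inj_on_subset[OF inj_mono subset_UNIV]])
  ultimately show ?thesis by (simp add: card_monos r_d_def)
qed


lemma univ_zero:
  fixes \<beta> :: "nat \<Rightarrow> 'a::{finite,field}"
  assumes "\<forall>x::'a. (\<Sum>e<CARD('a). \<beta> e * x ^ e) = 0" "e < CARD('a)"
  shows "\<beta> e = 0"
proof -
  define p where "p = (\<Sum>e<CARD('a). monom (\<beta> e) e)"
  have ev: "poly p x = (\<Sum>e<CARD('a). \<beta> e * x ^ e)" for x
    by (simp add: p_def poly_sum poly_monom)
  have "p = 0"
  proof (rule ccontr)
    assume "p \<noteq> 0"
    then have "card {x. poly p x = 0} \<le> degree p" by (rule card_poly_roots_bound)
    moreover have "{x. poly p x = 0} = UNIV" using assms(1) ev by auto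
    moreover have "degree p \<le> CARD('a) - 1"
      unfolding p_def by (rule degree_sum_le) (auto intro: order.trans[OF degree_monom_le])
    ultimately have "CARD('a) \<le> CARD('a) - 1" by (metis order.trans card_UNIV)
    moreover have "CARD('a) \<ge> 2" by (rule card_field_ge2)
    ultimately show False by linarith
  qed
  then have "coeff p e = 0" by simp
  moreover have "coeff p e = \<beta> e"
    using assms(2) by (simp add: p_def coeff_sum coeff_monom)
  ultimately show ?thesis by simp
qed

definition proj :: "nat \<Rightarrow> (nat \<Rightarrow> nat) \<Rightarrow> nat \<Rightarrow> nat" where
  "proj n a = (\<lambda>i. if i < n then a i else 0)"

lemma redpoly_zero:
  fixes c :: "(nat \<Rightarrow> nat) \<Rightarrow> 'a::{finite,field}"
  assumes "finite S" "\<forall>a\<in>S. \<forall>i<n. a i < CARD('a)" "inj_on (proj n) S"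
    "\<forall>v. (\<Sum>a\<in>S. c a * (\<Prod>i<n. v i ^ a i)) = 0"
  shows "\<forall>a\<in>S. c a = 0"
  using assms
proof (induction n arbitrary: S)
  case 0
  show ?case
  proof
    fix a assume a: "a \<in> S"
    have "S = {a}"
    proof
      show "S \<subseteq> {a}"
      proof
        fix b assume "b \<in> S"
        moreover have "proj 0 b = proj 0 a" by (simp add: proj_def)
        ultimately show "b \<in> {a}" using a 0(3) by (auto dest: inj_onD)
      qed
    qed (use a in simp)
    then show "c a = 0" using 0(4) by simp
  qed
next
  case (Suc n)
  let ?q = "CARD('a)"
  define Se where "Se e = {a \<in> S. a n = e}" for e
  define w where "w e v = (\<Sum>a\<in>Se e. c a * (\<Prod>i<n. v i ^ a i))" for e v
  have wz: "w e v = 0" if "e < ?q" for e v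
  proof -
    have "(\<Sum>e<?q. w e v * x ^ e) = 0" for x
    proof -
      let ?v = "v(n := x)"
      have "0 = (\<Sum>a\<in>S. c a * (\<Prod>i<Suc n. ?v i ^ a i))" by (rule Suc.prems(4)[rule_format, symmetric])
      also have "\<dots> = (\<Sum>e<?q. \<Sum>a\<in>Se e. c a * (\<Prod>i<Suc n. ?v i ^ a i))"
        unfolding Se_def
        by (rule sum.group[symmetric]) (use Suc.prems(1,2) in auto)
      also have "\<dots> = (\<Sum>e<?q. w e v * x ^ e)"
      proof (rule sum.cong[OF refl])
        fix e
        have "(\<Sum>a\<in>Se e. c a * (\<Prod>i<Suc n. ?v i ^ a i)) = (\<Sum>a\<in>Se e. (c a * (\<Prod>i<n. v i ^ a i)) * x ^ e)"
        proof (rule sum.cong[OF refl])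
          fix a assume "a \<in> Se e"
          then have "a n = e" by (simp add: Se_def)
          moreover have "(\<Prod>i<n. ?v i ^ a i) = (\<Prod>i<n. v i ^ a i)" by (intro prod.cong) auto
          ultimately show "c a * (\<Prod>i<Suc n. ?v i ^ a i) = (c a * (\<Prod>i<n. v i ^ a i)) * x ^ e"
            by (simp add: prod.lessThan_Suc mult.assoc)
        qed
        also have "\<dots> = w e v * x ^ e" by (simp add: w_def sum_distrib_right)
        finally show "(\<Sum>a\<in>Se e. c a * (\<Prod>i<Suc n. ?v i ^ a i)) = w e v * x ^ e" .
      qed
      finally show ?thesis by simp
    qed
    then show ?thesis using univ_zero[of "\<lambda>e. w e v"] that by blast
  qed
  show ?case
  proof
    fix a assume a: "a \<in> S"
    let ?e = "a n"
    have e: "?e < ?q" using a Suc.prems(2) by simp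
    have fin: "finite (Se ?e)" using Suc.prems(1) by (simp add: Se_def)
    have b: "\<forall>b\<in>Se ?e. \<forall>i<n. b i < ?q" using Suc.prems(2) by (auto simp: Se_def)
    have inj: "inj_on (proj n) (Se ?e)"
    proof (rule inj_onI)
      fix x y assume xy: "x \<in> Se ?e" "y \<in> Se ?e" "proj n x = proj n y"
      have "proj (Suc n) x = proj (Suc n) y"
      proof
        fix i
        show "proj (Suc n) x i = proj (Suc n) y i"
        proof (cases "i = n")
          case True then show ?thesis using xy(1,2) by (simp add: proj_def Se_def)
        next
          case False then show ?thesis using fun_cong[OF xy(3), of i] by (auto simp: proj_def split: if_splits)
        qed
      qed
      then show "x = y" using Suc.prems(3) xy(1,2) by (auto simp: Se_def dest: inj_onD)
    qed
    have "\<forall>b\<in>Se ?e. c b = 0"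
      using Suc.IH[OF fin b inj] wz[OF e] unfolding w_def by blast
    then show "c a = 0" using a by (simp add: Se_def)
  qed
qed

lemma supp_fin: "F \<in> hom_polys m d \<Longrightarrow> finite {a. F a \<noteq> 0}"
  by (rule finite_subset[OF _ finite_monos]) (auto simp: hom_polys_def)

lemma sum_split_top: "(\<Sum>i\<le>m. (a::nat \<Rightarrow> nat) i) = (\<Sum>i<m. a i) + a m"
  by (simp add: lessThan_Suc_atMost[symmetric])

lemma prod_split_top: "(\<Prod>i\<le>m. (f::nat \<Rightarrow> 'a::comm_monoid_mult) i) = (\<Prod>i<m. f i) * f m"
  by (simp add: lessThan_Suc_atMost[symmetric])

lemma top_zero:
  assumes F: "F \<in> PR_hom_polys m d" and top: "\<forall>a. F a \<noteq> 0 \<longrightarrow> a m > 0"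
    and van: "\<forall>v. eval_poly m F v = 0"
  shows "F = (0 :: (nat \<Rightarrow> nat) \<Rightarrow> 'a::{finite,field})"
proof -
  let ?q = "CARD('a)"
  let ?S = "{a. F a \<noteq> 0}"
  have Fh: "F \<in> hom_polys m d" using F by (simp add: PR_hom_polys_def)
  have finS: "finite ?S" using Fh by (rule supp_fin)
  have Sm: "a \<in> monos_deg m d" if "a \<in> ?S" for a using Fh that by (simp add: hom_polys_def)
  have red: "\<forall>a\<in>?S. \<forall>i<m. a i < ?q"
  proof (intro ballI allI impI)
    fix a i assume a: "a \<in> ?S" and i: "i < m"
    have am: "a m > 0" using a top by simp
    have pr: "proj_reduced_mono ?q m a" using a F by (simp add: PR_hom_polys_def)
    have "a \<noteq> (\<lambda>_. 0)" using am by auto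
    then obtain k where k: "k \<le> m" "a k > 0" "\<forall>i>k. a i = 0" "\<forall>i<k. a i \<le> ?q - 1"
      using pr unfolding proj_reduced_mono_def by blast
    have "k = m"
    proof (rule ccontr)
      assume "k \<noteq> m" then have "k < m" using k(1) by simp
      then have "a m = 0" using k(3) by simp
      then show False using am by simp
    qed
    then have "a i \<le> ?q - 1" using k(4) i by simp
    moreover have "?q \<ge> 2" by (rule card_field_ge2)
    ultimately show "a i < ?q" by linarith
  qed
  have inj: "inj_on (proj m) ?S"
  proof (rule inj_onI)
    fix a b assume a: "a \<in> ?S" and b: "b \<in> ?S" and ab: "proj m a = proj m b"
    have lt: "a i = b i" if "i < m" for i using fun_cong[OF ab, of i] that by (simp add: proj_def)
    have "(\<Sum>i<m. a i) = (\<Sum>i<m. b i)" using lt by (intro sum.cong) auto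
    moreover have "(\<Sum>i\<le>m. a i) = d" "(\<Sum>i\<le>m. b i) = d"
      using Sm[OF a] Sm[OF b] by (simp_all add: monos_deg_def)
    ultimately have "a m = b m" using sum_split_top[where m=m and a=a] sum_split_top[where m=m and a=b] by simp
    moreover have "a i = 0" "b i = 0" if "i > m" for i
      using Sm[OF a] Sm[OF b] that by (simp_all add: monos_deg_def)
    ultimately show "a = b" using lt by (metis linorder_neqE_nat ext)
  qed
  have sums: "\<forall>v. (\<Sum>a\<in>?S. F a * (\<Prod>i<m. v i ^ a i)) = 0"
  proof
    fix v :: "nat \<Rightarrow> 'a"
    let ?v = "v(m := 1)"
    have "0 = eval_poly m F ?v" using van by simp
    also have "\<dots> = (\<Sum>a\<in>?S. F a * (\<Prod>i<m. v i ^ a i))"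
      unfolding eval_poly_def
    proof (rule sum.cong[OF refl])
      fix a
      have "(\<Prod>i\<le>m. ?v i ^ a i) = (\<Prod>i<m. ?v i ^ a i) * ?v m ^ a m" by (rule prod_split_top)
      also have "(\<Prod>i<m. ?v i ^ a i) = (\<Prod>i<m. v i ^ a i)" by (intro prod.cong) auto
      finally show "F a * (\<Prod>i\<le>m. ?v i ^ a i) = F a * (\<Prod>i<m. v i ^ a i)" by simp
    qed
    finally show "(\<Sum>a\<in>?S. F a * (\<Prod>i<m. v i ^ a i)) = 0" by simp
  qed
  have "\<forall>a\<in>?S. F a = 0" by (rule redpoly_zero[OF finS red inj sums])
  then show ?thesis by (auto simp: fun_eq_iff)
qed

lemma low_part:
  assumes F: "F \<in> PR_hom_polys (Suc m) d" and van: "\<forall>v. eval_poly (Suc m) F v = 0"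
  defines "F1 \<equiv> (\<lambda>a. if a (Suc m) = 0 then F a else (0::'a::{finite,field}))"
  shows "F1 \<in> PR_hom_polys m d" "\<forall>v. eval_poly m F1 v = 0"
proof -
  have Fh: "F \<in> hom_polys (Suc m) d" using F by (simp add: PR_hom_polys_def)
  show "F1 \<in> PR_hom_polys m d"
    unfolding PR_hom_polys_def hom_polys_def
  proof (intro CollectI conjI allI impI)
    fix a assume "F1 a \<noteq> 0"
    then have a0: "a (Suc m) = 0" and Fa: "F a \<noteq> 0" by (auto simp: F1_def split: if_splits)
    have am: "a \<in> monos_deg (Suc m) d" using Fa Fh by (simp add: hom_polys_def)
    have "(\<Sum>i\<le>m. a i) = (\<Sum>i\<le>Suc m. a i)" using a0 by simp
    moreover have "\<forall>i>m. a i = 0"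
    proof (intro allI impI)
      fix i assume "i > m" then show "a i = 0" using a0 am by (cases "i = Suc m") (auto simp: monos_deg_def)
    qed
    ultimately show "a \<in> monos_deg m d" using am by (simp add: monos_deg_def)
    have "proj_reduced_mono CARD('a) (Suc m) a" using Fa F by (simp add: PR_hom_polys_def)
    then show "proj_reduced_mono CARD('a) m a"
      unfolding proj_reduced_mono_def
    proof (elim disjE exE conjE)
      fix k assume k: "k \<le> Suc m" "0 < a k" "\<forall>i>k. a i = 0" "\<forall>i<k. a i \<le> CARD('a) - 1"
      have "k \<noteq> Suc m" using k(2) a0 by auto
      then have "k \<le> m" using k(1) by simp
      then show "a = (\<lambda>_. 0) \<or> (\<exists>k\<le>m. 0 < a k \<and> (\<forall>i>k. a i = 0) \<and> (\<forall>i<k. a i \<le> CARD('a) - 1))"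
        using k by blast
    qed simp
  qed
  show "\<forall>v. eval_poly m F1 v = 0"
  proof
    fix v :: "nat \<Rightarrow> 'a"
    let ?v = "v(Suc m := 0)"
    have "0 = eval_poly (Suc m) F ?v" using van by simp
    also have "\<dots> = (\<Sum>a\<in>{a. F a \<noteq> 0}. F1 a * (\<Prod>i\<le>m. v i ^ a i))"
      unfolding eval_poly_def
    proof (rule sum.cong[OF refl])
      fix a
      have "(\<Prod>i\<le>Suc m. ?v i ^ a i) = (\<Prod>i\<le>m. ?v i ^ a i) * ?v (Suc m) ^ a (Suc m)"
        by simp
      also have "(\<Prod>i\<le>m. ?v i ^ a i) = (\<Prod>i\<le>m. v i ^ a i)" by (intro prod.cong) auto
      finally show "F a * (\<Prod>i\<le>Suc m. ?v i ^ a i) = F1 a * (\<Prod>i\<le>m. v i ^ a i)"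
        by (simp add: F1_def zero_power)
    qed
    also have "\<dots> = eval_poly m F1 v"
      unfolding eval_poly_def
      by (rule sum.mono_neutral_right) (auto simp: F1_def supp_fin[OF Fh] split: if_splits)
    finally show "eval_poly m F1 v = 0" by simp
  qed
qed

lemma PR_vanish_zero:
  assumes "F \<in> PR_hom_polys m d" "d \<ge> 1" "\<forall>v. eval_poly m F v = 0"
  shows "F = (0 :: (nat \<Rightarrow> nat) \<Rightarrow> 'a::{finite,field})"
  using assms
proof (induction m arbitrary: F)
  case 0
  have "\<forall>a. F a \<noteq> 0 \<longrightarrow> a 0 > 0"
  proof (intro allI impI)
    fix a assume "F a \<noteq> 0"
    then have "a \<in> monos_deg 0 d" using 0(1) by (simp add: PR_hom_polys_def hom_polys_def)
    then have "a 0 = d" by (simp add: monos_deg_def)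
    then show "a 0 > 0" using 0(2) by simp
  qed
  then show ?case by (rule top_zero[OF 0(1) _ 0(3)])
next
  case (Suc m)
  define F1 where "F1 = (\<lambda>a. if a (Suc m) = 0 then F a else (0::'a))"
  have h1: "F1 \<in> PR_hom_polys m d" and h2: "\<forall>v. eval_poly m F1 v = 0"
    unfolding F1_def by (rule low_part[OF Suc.prems(1,3)])+
  have "F1 = 0" by (rule Suc.IH[OF h1 Suc.prems(2) h2])
  have "\<forall>a. F a \<noteq> 0 \<longrightarrow> a (Suc m) > 0"
  proof (intro allI impI)
    fix a assume Fa: "F a \<noteq> 0"
    have "F1 a = 0" using \<open>F1 = 0\<close> by simp
    then show "a (Suc m) > 0" using Fa unfolding F1_def by (simp split: if_splits)
  qed
  then show ?case by (rule top_zero[OF Suc.prems(1) _ Suc.prems(3)])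
qed


lemma dim_image_eq_gen:
  fixes f :: "('b \<Rightarrow> 'a::field) \<Rightarrow> ('c \<Rightarrow> 'a)"
  assumes lf: "Vector_Spaces.linear fscale fscale f" and fi: "inj_on f (VS.span S)"
  shows "VS.dim (f ` S) = VS.dim S"
proof -
  obtain B where B: "B \<subseteq> S" "VS.independent B" "S \<subseteq> VS.span B" "card B = VS.dim S"
    using VS.basis_exists[of S] by metis
  have spB: "VS.span S = VS.span B"
    using VS.span_mono[of B S] VS.span_mono[of S "VS.span B"] VS.span_span[of B] B by auto
  have inB: "inj_on f (VS.span B)" using fi spB by simp
  have cB: "card (f ` B) = card B"
    using card_image[of f B] inj_on_subset[OF fi] VS.span_superset[of S] B(1) by (meson order.trans)
  have indep: "VS.independent (f ` B)"
    by (rule VP.linear_independent_injective_image[OF lf B(2) inB])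
  have "VS.span (f ` S) = f ` VS.span S" by (rule VP.linear_span_image[OF lf])
  also have "\<dots> = f ` VS.span B" using spB by simp
  also have "\<dots> = VS.span (f ` B)" by (rule VP.linear_span_image[OF lf, symmetric])
  finally have "VS.dim (f ` S) = VS.dim (f ` B)" by (metis VS.dim_span)
  also have "\<dots> = card (f ` B)" by (rule VS.dim_eq_card_independent[OF indep])
  finally show ?thesis using cB B(4) by simp
qed

lemma indep_of_dim:
  assumes "finite S" "VS.dim (S :: ('b \<Rightarrow> 'a::field) set) = card S"
  shows "VS.independent S"
proof
  assume "VS.dependent S"
  then obtain a where a: "a \<in> S" "a \<in> VS.span (S - {a})" unfolding VS.dependent_def by blast
  have "S \<subseteq> VS.span (S - {a})"
  proof
    fix x assume "x \<in> S"
    show "x \<in> VS.span (S - {a})"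
    proof (cases "x = a")
      case True then show ?thesis using a by simp
    next
      case False then show ?thesis using \<open>x \<in> S\<close> by (intro VS.span_base) simp
    qed
  qed
  then have "VS.dim S \<le> card (S - {a})" by (rule VS.dim_le_card) (use assms in simp)
  also have "\<dots> < card S" by (rule card_Diff1_less[OF assms(1) a(1)])
  finally show False using assms(2) by simp
qed

lemma line_mem: "v \<in> proj_line v"
  unfolding proj_line_def by (rule CollectI, rule exI[of _ 1]) (simp add: fscale_def)

lemma line_scale: "(c::'a::field) \<noteq> 0 \<Longrightarrow> proj_line (fscale c v) = proj_line v"
proof -
  assume c: "c \<noteq> 0"
  show ?thesis
  proof
    show "proj_line (fscale c v) \<subseteq> proj_line v"
    proof
      fix w assume "w \<in> proj_line (fscale c v)"
      then obtain e where "w = fscale e (fscale c v)" unfolding proj_line_def by blast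
      then have "w = fscale (e * c) v" by (simp add: fscale_def fun_eq_iff mult.assoc)
      then show "w \<in> proj_line v" unfolding proj_line_def by blast
    qed
    show "proj_line v \<subseteq> proj_line (fscale c v)"
    proof
      fix w assume "w \<in> proj_line v"
      then obtain e where "w = fscale e v" unfolding proj_line_def by blast
      then have "w = fscale (e / c) (fscale c v)" using c by (simp add: fscale_def fun_eq_iff)
      then show "w \<in> proj_line (fscale c (v::nat \<Rightarrow> 'a))" unfolding proj_line_def by blast
    qed
  qed
qed

lemma rep_cover:
  assumes R: "rep_system m R" and v: "v \<in> aff_vecs m" "v \<noteq> 0"
  shows "\<exists>P\<in>R. \<exists>c. c \<noteq> (0::'a::field) \<and> v = fscale c P"
proof -
  have "proj_line v \<in> proj_points m" using v unfolding proj_points_def by blast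
  then obtain P where P: "P \<in> R" "proj_line P = proj_line v"
    using R unfolding rep_system_def bij_betw_def by (metis imageE)
  then have "v \<in> proj_line P" using line_mem by simp
  then obtain c where c: "v = fscale c P" unfolding proj_line_def by blast
  have "c \<noteq> 0" using c v(2) by (auto simp: fscale_def fun_eq_iff)
  then show ?thesis using P c by blast
qed

lemma aff_image: "aff_vecs m = ext0 m ` PiE {..m} (\<lambda>_. (UNIV :: 'a::field set))"
proof
  show "aff_vecs m \<subseteq> ext0 m ` PiE {..m} (\<lambda>_. (UNIV :: 'a set))"
  proof
    fix v :: "nat \<Rightarrow> 'a" assume v: "v \<in> aff_vecs m"
    have eq: "v = ext0 m (restrict v {..m})" using v by (auto simp: aff_vecs_def ext0_def fun_eq_iff)
    show "v \<in> ext0 m ` PiE {..m} (\<lambda>_. UNIV)" by (rule image_eqI[where f="ext0 m", OF eq]) simp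
  qed
  show "ext0 m ` PiE {..m} (\<lambda>_. (UNIV :: 'a set)) \<subseteq> aff_vecs m"
    by (auto simp: aff_vecs_def ext0_def)
qed

lemma inj_ext0: "inj_on (ext0 m) (PiE {..m} (\<lambda>_. (UNIV :: 'a::field set)))"
proof (rule inj_onI)
  fix f g :: "nat \<Rightarrow> 'a" assume f: "f \<in> PiE {..m} (\<lambda>_. UNIV)" and g: "g \<in> PiE {..m} (\<lambda>_. UNIV)"
    and e: "ext0 m f = ext0 m g"
  show "f = g"
  proof (rule PiE_ext[OF f g])
    fix i assume "i \<in> {..m}" then show "f i = g i" using fun_cong[OF e, of i] by (simp add: ext0_def)
  qed
qed

lemma card_aff: "card (aff_vecs m :: (nat \<Rightarrow> 'a::{finite,field}) set) = CARD('a) ^ Suc m"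
proof -
  have "card (aff_vecs m :: (nat \<Rightarrow> 'a) set) = card (PiE {..m} (\<lambda>_. (UNIV :: 'a set)))"
    unfolding aff_image by (rule card_image[OF inj_ext0])
  also have "\<dots> = CARD('a) ^ Suc m" by (simp add: card_PiE)
  finally show ?thesis .
qed

lemma finite_aff: "finite (aff_vecs m :: (nat \<Rightarrow> 'a::{finite,field}) set)"
  unfolding aff_image by (intro finite_imageI finite_PiE) auto

lemma geom: "(\<Sum>i\<le>m. (p + 1) ^ i) * p + 1 = (p + 1 :: nat) ^ Suc m"
  by (induction m) (simp_all add: algebra_simps)

lemma card_R:
  assumes R: "rep_system m R"
  shows "card (R :: (nat \<Rightarrow> 'a::{finite,field}) set) = p_m CARD('a) m"
proof -
  let ?q = "CARD('a)"
  let ?f = "\<lambda>(P, c). fscale (c::'a) P"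
  have Rsub: "R \<subseteq> aff_vecs m - {0}" using R by (simp add: rep_system_def)
  have finR: "finite R" using finite_aff by (rule finite_subset[OF order.trans[OF Rsub Diff_subset]])
  have injl: "inj_on proj_line R" using R by (simp add: rep_system_def bij_betw_def)
  have bij: "bij_betw ?f (R \<times> (UNIV - {0})) (aff_vecs m - {0})"
  proof (rule bij_betw_imageI)
    show "inj_on ?f (R \<times> (UNIV - {0}))"
    proof (rule inj_onI)
      fix x y assume x: "x \<in> R \<times> (UNIV - {0::'a})" and y: "y \<in> R \<times> (UNIV - {0::'a})"
        and exy: "?f x = ?f y"
      obtain P c where xp: "x = (P, c)" by (cases x)
      obtain P' c' where yp: "y = (P', c')" by (cases y)
      have P: "P \<in> R" and P': "P' \<in> R" and c: "c \<noteq> 0" and c': "c' \<noteq> 0"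
        using x y xp yp by auto
      have e: "fscale c P = fscale c' P'" using exy xp yp by simp
      have "proj_line P = proj_line P'"
        using line_scale[OF c, of P] line_scale[OF c', of P'] e by simp
      then have PP: "P = P'" using injl P P' by (auto dest: inj_onD)
      have "P \<noteq> 0" using Rsub P by auto
      then obtain i where "P i \<noteq> 0" by (auto simp: fun_eq_iff)
      moreover have "c * P i = c' * P i" using fun_cong[OF e, of i] PP by simp
      ultimately have "c = c'" by simp
      then show "x = y" using PP xp yp by simp
    qed
    show "?f ` (R \<times> (UNIV - {0})) = aff_vecs m - {0}"
    proof
      show "?f ` (R \<times> (UNIV - {0})) \<subseteq> aff_vecs m - {0}"
      proof
        fix v :: "nat \<Rightarrow> 'a" assume "v \<in> ?f ` (R \<times> (UNIV - {0}))"
        then obtain P and c :: 'a where P: "P \<in> R" and c: "c \<noteq> 0" and vP: "v = fscale c P" by auto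
        have "P \<in> aff_vecs m" "P \<noteq> 0" using Rsub P by auto
        then obtain i where "P i \<noteq> 0" by (auto simp: fun_eq_iff)
        then have "fscale c P \<noteq> 0" using c by (auto simp: fun_eq_iff)
        moreover have "fscale c P \<in> aff_vecs m" using \<open>P \<in> aff_vecs m\<close> by (simp add: aff_vecs_def)
        ultimately show "v \<in> aff_vecs m - {0}" using vP by simp
      qed
      show "aff_vecs m - {0} \<subseteq> ?f ` (R \<times> (UNIV - {0}))"
      proof
        fix v :: "nat \<Rightarrow> 'a" assume "v \<in> aff_vecs m - {0}"
        then obtain P c where P: "P \<in> R" "c \<noteq> 0" "v = fscale c P" using rep_cover[OF R] by blast
        show "v \<in> ?f ` (R \<times> (UNIV - {0}))"
          by (rule image_eqI[where x="(P, c)"]) (use P in simp_all)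
      qed
    qed
  qed
  have "card (R \<times> (UNIV - {0::'a})) = card (aff_vecs m - {0 :: nat \<Rightarrow> 'a})"
    by (rule bij_betw_same_card[OF bij])
  moreover have "card (R \<times> (UNIV - {0::'a})) = card R * (?q - 1)"
    by (simp add: card_cartesian_product card_Diff_singleton)
  moreover have "card (aff_vecs m - {0 :: nat \<Rightarrow> 'a}) = ?q ^ Suc m - 1"
  proof -
    have "(0 :: nat \<Rightarrow> 'a) \<in> aff_vecs m" by (simp add: aff_vecs_def)
    then show ?thesis using finite_aff by (simp add: card_Diff_singleton card_aff)
  qed
  ultimately have eq: "card R * (?q - 1) = ?q ^ Suc m - 1" by simp
  have q2: "?q \<ge> 2" by (rule card_field_ge2)
  obtain p where p: "?q = p + 1" "p > 0" using q2 by (intro that[of "?q - 1"]) auto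
  have "(p + 1) ^ Suc m \<ge> 1" by (rule one_le_power) simp
  then have "card R * p + 1 = (p + 1) ^ Suc m" using eq p by simp
  also have "\<dots> = p_m ?q m * p + 1" unfolding p_m_def p(1) by (rule geom[symmetric])
  finally have "card R * p = p_m ?q m * p" by simp
  then show ?thesis using p(2) by simp
qed


definition evc :: "nat \<Rightarrow> nat \<Rightarrow> (nat \<Rightarrow> 'a::field) set \<Rightarrow> ((nat \<Rightarrow> nat) \<Rightarrow> 'a) \<Rightarrow> ((nat \<Rightarrow> 'a) \<Rightarrow> 'a)" where
  "evc m d R F = (\<lambda>P. if P \<in> R then evh m d F P else 0)"

lemma linear_evc: "Vector_Spaces.linear fscale fscale (evc m d R :: ((nat \<Rightarrow> nat) \<Rightarrow> 'a::field) \<Rightarrow> _)"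
proof (rule iffD2[OF Vector_Spaces.linear_iff], intro conjI allI)
  show "vector_space (fscale :: 'a \<Rightarrow> ((nat \<Rightarrow> nat) \<Rightarrow> 'a) \<Rightarrow> _)" by (rule vector_space_fscale)
  show "vector_space (fscale :: 'a \<Rightarrow> ((nat \<Rightarrow> 'a) \<Rightarrow> 'a) \<Rightarrow> _)" by (rule vector_space_fscale)
  fix x y :: "(nat \<Rightarrow> nat) \<Rightarrow> 'a"
  show "evc m d R (x + y) = evc m d R x + evc m d R y"
    by (simp add: evc_def fun_eq_iff evh_add)
next
  fix c and x :: "(nat \<Rightarrow> nat) \<Rightarrow> 'a"
  show "evc m d R (fscale c x) = fscale c (evc m d R x)"
    by (simp add: evc_def fun_eq_iff evh_scale)
qed

lemma PRM_eq: "PRM d m R = evc m d R ` hom_polys m d"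
proof -
  have e: "(\<lambda>P. if P \<in> R then eval_poly m F P else 0) = evc m d R F" if "F \<in> hom_polys m d" for F
    using that by (simp add: evc_def fun_eq_iff eval_poly_hom)
  have "PRM d m R = (\<lambda>F. (\<lambda>P. if P \<in> R then eval_poly m F P else 0)) ` hom_polys m d"
    unfolding PRM_def by (rule Setcompr_eq_image)
  also have "\<dots> = evc m d R ` hom_polys m d" by (rule image_cong[OF refl e])
  finally show ?thesis .
qed

lemma PRM_PR: "PRM d m R = evc m d R ` (PR_hom_polys m d :: ((nat \<Rightarrow> nat) \<Rightarrow> 'a::{finite,field}) set)"
proof
  show "evc m d R ` PR_hom_polys m d \<subseteq> PRM d m R"
    unfolding PRM_eq using PR_sub_hom by (rule image_mono)
  show "PRM d m R \<subseteq> evc m d R ` PR_hom_polys m d"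
  proof
    fix c assume "c \<in> PRM d m R"
    then obtain F where F: "F \<in> hom_polys m d" "c = evc m d R F" unfolding PRM_eq by blast
    obtain I where I: "I \<in> ideal_deg m d" "F - I \<in> PR_hom_polys m d" using hom_decomp[OF F(1)] by blast
    have "\<forall>v. evh m d I v = 0" using I(1) ideal_sub by blast
    then have "evc m d R (F - I) = c" using F(2) by (simp add: evc_def fun_eq_iff evh_diff)
    then show "c \<in> evc m d R ` PR_hom_polys m d" using I(2) by (metis image_eqI)
  qed
qed

lemma evh_ext0: "evh m d F (ext0 m v) = evh m d F v"
  unfolding evh_def mon_def ext0_def by (intro sum.cong refl arg_cong2[where f="(*)"] prod.cong) auto

lemma vanish_all:
  assumes R: "rep_system m R" and d: "d \<ge> 1" and F: "F \<in> hom_polys m d"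
    and z: "\<forall>P\<in>R. evh m d F P = (0::'a::field)"
  shows "\<forall>v. eval_poly m F v = 0"
proof
  fix v :: "nat \<Rightarrow> 'a"
  let ?w = "ext0 m v"
  have w: "?w \<in> aff_vecs m" by (simp add: aff_vecs_def ext0_def)
  have "evh m d F ?w = 0"
  proof (cases "?w = 0")
    case True then show ?thesis using evh_at0[OF d] by simp
  next
    case False
    then obtain P c where P: "P \<in> R" "c \<noteq> 0" "?w = fscale c P" using rep_cover[OF R w] by blast
    then show ?thesis using z by (simp add: evh_homog)
  qed
  then show "eval_poly m F v = 0" using F by (simp add: eval_poly_hom evh_ext0)
qed

lemma inj_PR:
  assumes R: "rep_system m R" and d: "d \<ge> 1"
  shows "inj_on (evc m d R) (PR_hom_polys m d :: ((nat \<Rightarrow> nat) \<Rightarrow> 'a::{finite,field}) set)"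
  unfolding VP.linear_inj_on_iff_eq_0[OF linear_evc subspace_PR]
proof (intro ballI impI)
  fix F :: "(nat \<Rightarrow> nat) \<Rightarrow> 'a" assume F: "F \<in> PR_hom_polys m d" and e: "evc m d R F = 0"
  have Fh: "F \<in> hom_polys m d" using F PR_sub_hom by blast
  have "\<forall>P\<in>R. evh m d F P = 0"
  proof
    fix P assume "P \<in> R" then show "evh m d F P = 0" using fun_cong[OF e, of P] by (simp add: evc_def)
  qed
  then have "\<forall>v. eval_poly m F v = 0" by (rule vanish_all[OF R d Fh])
  then show "F = 0" by (rule PR_vanish_zero[OF F d])
qed

lemma line_vanish:
  assumes d: "d \<ge> 1" and G: "G \<in> hom_polys m d"
  shows "(\<forall>v\<in>proj_line P. eval_poly m G v = 0) \<longleftrightarrow> evh m d G P = (0::'a::field)"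
proof
  assume "\<forall>v\<in>proj_line P. eval_poly m G v = 0"
  then show "evh m d G P = 0" using line_mem[of P] G by (simp add: eval_poly_hom)
next
  assume z: "evh m d G P = 0"
  show "\<forall>v\<in>proj_line P. eval_poly m G v = 0"
  proof
    fix v assume "v \<in> proj_line P"
    then obtain c where "v = fscale c P" unfolding proj_line_def by blast
    then show "eval_poly m G v = 0" using z G by (simp add: eval_poly_hom evh_homog)
  qed
qed

lemma zeros_card:
  assumes R: "rep_system m R" and d: "d \<ge> 1" and Gs: "Gs \<subseteq> hom_polys m d"
  shows "card {L \<in> proj_points m. \<forall>G\<in>Gs. \<forall>v\<in>L. eval_poly m G v = 0}
       = card {P \<in> R. \<forall>G\<in>Gs. evh m d G P = (0::'a::field)}"
proof -
  have bij: "bij_betw proj_line R (proj_points m)" using R by (simp add: rep_system_def)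
  have eq: "{L \<in> proj_points m. \<forall>G\<in>Gs. \<forall>v\<in>L. eval_poly m G v = 0}
      = proj_line ` {P \<in> R. \<forall>G\<in>Gs. evh m d G P = 0}"
  proof
    show "{L \<in> proj_points m. \<forall>G\<in>Gs. \<forall>v\<in>L. eval_poly m G v = 0} \<subseteq> proj_line ` {P \<in> R. \<forall>G\<in>Gs. evh m d G P = 0}"
    proof
      fix L assume L: "L \<in> {L \<in> proj_points m. \<forall>G\<in>Gs. \<forall>v\<in>L. eval_poly m G v = 0}"
      then have "L \<in> proj_line ` R" using bij by (simp add: bij_betw_def)
      then obtain P where P: "P \<in> R" "L = proj_line P" by (rule imageE) simp
      have "\<forall>G\<in>Gs. evh m d G P = 0" using L P line_vanish[OF d] Gs by blast
      then show "L \<in> proj_line ` {P \<in> R. \<forall>G\<in>Gs. evh m d G P = 0}" using P by blast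
    qed
    show "proj_line ` {P \<in> R. \<forall>G\<in>Gs. evh m d G P = 0} \<subseteq> {L \<in> proj_points m. \<forall>G\<in>Gs. \<forall>v\<in>L. eval_poly m G v = 0}"
    proof
      fix L assume "L \<in> proj_line ` {P \<in> R. \<forall>G\<in>Gs. evh m d G P = 0}"
      then obtain P where P: "P \<in> R" "\<forall>G\<in>Gs. evh m d G P = 0" "L = proj_line P" by blast
      have "L \<in> proj_points m" using P bij unfolding bij_betw_def by blast
      moreover have "\<forall>G\<in>Gs. \<forall>v\<in>L. eval_poly m G v = 0" using P line_vanish[OF d] Gs by blast
      ultimately show "L \<in> {L \<in> proj_points m. \<forall>G\<in>Gs. \<forall>v\<in>L. eval_poly m G v = 0}" by blast
    qed
  qed
  have "inj_on proj_line {P \<in> R. \<forall>G\<in>Gs. evh m d G P = 0}"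
    using bij unfolding bij_betw_def by (rule inj_on_subset[OF conjunct1]) auto
  then show ?thesis unfolding eq by (rule card_image)
qed

lemma span_vanish:
  "(\<forall>G\<in>VS.span Gs. evh m d G P = 0) \<longleftrightarrow> (\<forall>G\<in>Gs. evh m d G P = (0::'a::field))"
proof
  assume "\<forall>G\<in>VS.span Gs. evh m d G P = 0"
  then show "\<forall>G\<in>Gs. evh m d G P = 0" using VS.span_superset by blast
next
  assume z: "\<forall>G\<in>Gs. evh m d G P = 0"
  have sub: "VS.subspace {G :: (nat \<Rightarrow> nat) \<Rightarrow> 'a. evh m d G P = 0}"
    unfolding VS.subspace_def by (simp add: evh_add evh_scale)
  have "VS.span Gs \<subseteq> {G. evh m d G P = 0}" using z by (intro VS.span_minimal[OF _ sub]) auto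
  then show "\<forall>G\<in>VS.span Gs. evh m d G P = 0" by blast
qed


lemma finite_PRM: "finite (PRM d m R :: ((nat \<Rightarrow> 'a::{finite,field}) \<Rightarrow> 'a) set)"
  unfolding PRM_eq by (rule finite_imageI[OF finite_hom])

lemma supp_sub: "D \<subseteq> PRM d m R \<Longrightarrow> Supp D \<subseteq> R"
proof
  fix x assume D: "D \<subseteq> PRM d m R" and "x \<in> Supp D"
  then obtain c where c: "c \<in> D" "c x \<noteq> 0" unfolding Supp_def by blast
  then have "c \<in> evc m d R ` hom_polys m d" using D PRM_eq by blast
  then obtain F where "c = evc m d R F" by (rule imageE) simp
  then show "x \<in> R" using c(2) by (simp add: evc_def split: if_splits)
qed

lemma finite_R: "rep_system m R \<Longrightarrow> finite (R :: (nat \<Rightarrow> 'a::{finite,field}) set)"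
  unfolding rep_system_def using finite_aff by (blast intro: finite_subset[OF order.trans[OF _ Diff_subset]])

lemma constr:
  assumes R: "rep_system m R" and d: "d \<ge> 1"
    and Gs: "Gs \<subseteq> PR_hom_polys m d" "card Gs = r" "VS.independent Gs"
  shows "\<exists>D. D \<subseteq> PRM d m R \<and> VS.subspace D \<and> VS.dim D = r \<and>
     card (Supp D) = card R - card {P \<in> R. \<forall>G\<in>Gs. evh m d G P = (0::'a::{finite,field})}"
proof -
  let ?D = "evc m d R ` VS.span Gs"
  have spPR: "VS.span Gs \<subseteq> PR_hom_polys m d" by (rule VS.span_minimal[OF Gs(1) subspace_PR])
  have "?D \<subseteq> PRM d m R" unfolding PRM_PR using spPR by (rule image_mono)
  moreover have "VS.subspace ?D" by (rule VP.linear_subspace_image[OF linear_evc VS.subspace_span])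
  moreover have "VS.dim ?D = r"
  proof -
    have inj: "inj_on (evc m d R) (VS.span (VS.span Gs))"
      using inj_on_subset[OF inj_PR[OF R d] spPR] by (simp add: VS.span_span)
    have "VS.dim ?D = VS.dim (VS.span Gs)" by (rule dim_image_eq_gen[OF linear_evc inj])
    also have "\<dots> = card Gs" by (simp add: VS.dim_eq_card_independent[OF Gs(3)])
    finally show ?thesis using Gs(2) by simp
  qed
  moreover have "card (Supp ?D) = card R - card {P \<in> R. \<forall>G\<in>Gs. evh m d G P = 0}"
  proof -
    have "Supp ?D = R - {P \<in> R. \<forall>G\<in>Gs. evh m d G P = 0}"
    proof
      show "Supp ?D \<subseteq> R - {P \<in> R. \<forall>G\<in>Gs. evh m d G P = 0}"
      proof
        fix x assume "x \<in> Supp ?D"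
        then obtain G where G: "G \<in> VS.span Gs" "evc m d R G x \<noteq> 0" unfolding Supp_def by blast
        then have x: "x \<in> R" "evh m d G x \<noteq> 0" by (auto simp: evc_def split: if_splits)
        then have "\<not> (\<forall>G\<in>Gs. evh m d G x = 0)" using span_vanish[of Gs m d x] G(1) by blast
        then show "x \<in> R - {P \<in> R. \<forall>G\<in>Gs. evh m d G P = 0}" using x by blast
      qed
      show "R - {P \<in> R. \<forall>G\<in>Gs. evh m d G P = 0} \<subseteq> Supp ?D"
      proof
        fix x assume x: "x \<in> R - {P \<in> R. \<forall>G\<in>Gs. evh m d G P = 0}"
        then obtain G where G: "G \<in> Gs" "evh m d G x \<noteq> 0" by blast
        have "G \<in> VS.span Gs" using G(1) by (rule VS.span_base)
        moreover have "evc m d R G x \<noteq> 0" using G x by (simp add: evc_def)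
        ultimately show "x \<in> Supp ?D" unfolding Supp_def by blast
      qed
    qed
    moreover have "finite R" using R by (rule finite_R)
    ultimately show ?thesis by (simp add: card_Diff_subset)
  qed
  ultimately show ?thesis by blast
qed

lemma decon:
  assumes R: "rep_system m R" and d: "d \<ge> 1"
    and D: "D \<subseteq> PRM d m R" "VS.subspace D" "VS.dim D = r"
  shows "\<exists>Gs. Gs \<subseteq> PR_hom_polys m d \<and> card Gs = r \<and> VS.independent Gs \<and>
     card (Supp D) = card R - card {P \<in> R. \<forall>G\<in>Gs. evh m d G P = (0::'a::{finite,field})}"
proof -
  obtain B where B: "B \<subseteq> D" "VS.independent B" "D \<subseteq> VS.span B" "card B = VS.dim D"
    by (rule VS.basis_exists)
  have finB: "finite B" by (rule finite_subset[OF order.trans[OF B(1) D(1)] finite_PRM])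
  define g where "g c = (SOME G. G \<in> PR_hom_polys m d \<and> evc m d R G = c)" for c
  have g: "g c \<in> PR_hom_polys m d \<and> evc m d R (g c) = c" if "c \<in> B" for c
  proof -
    have "c \<in> PRM d m R" using that B(1) D(1) by blast
    then have "c \<in> evc m d R ` PR_hom_polys m d" by (simp only: PRM_PR)
    then obtain G where G: "c = evc m d R G" "G \<in> PR_hom_polys m d" by (rule imageE)
    have "\<exists>G. G \<in> PR_hom_polys m d \<and> evc m d R G = c" using G by (intro exI[of _ G]) simp
    then have "(SOME G. G \<in> PR_hom_polys m d \<and> evc m d R G = c) \<in> PR_hom_polys m d \<and>
       evc m d R (SOME G. G \<in> PR_hom_polys m d \<and> evc m d R G = c) = c" by (rule someI_ex)
    then show ?thesis by (simp only: g_def)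
  qed
  define Gs where "Gs = g ` B"
  have injg: "inj_on g B"
  proof (rule inj_onI)
    fix x y assume xy: "x \<in> B" "y \<in> B" "g x = g y"
    have e1: "evc m d R (g x) = x" using g[OF xy(1)] by (rule conjunct2)
    have e2: "evc m d R (g y) = y" using g[OF xy(2)] by (rule conjunct2)
    have "x = evc m d R (g x)" using e1 by (rule sym)
    also have "\<dots> = evc m d R (g y)" using xy(3) by (rule arg_cong)
    also have "\<dots> = y" by (rule e2)
    finally show "x = y" .
  qed
  have GsPR: "Gs \<subseteq> PR_hom_polys m d"
  proof
    fix G assume "G \<in> Gs"
    then obtain c where c: "G = g c" "c \<in> B" unfolding Gs_def by (rule imageE)
    then show "G \<in> PR_hom_polys m d" using g[OF c(2)] by simp
  qed
  have cGs: "card Gs = r" unfolding Gs_def using card_image[OF injg] B(4) D(3) by simp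
  have finGs: "finite Gs" unfolding Gs_def using finB by simp
  have imG: "evc m d R ` Gs = B"
  proof -
    have "evc m d R ` Gs = (\<lambda>c. evc m d R (g c)) ` B" unfolding Gs_def by (simp add: image_image)
    also have "\<dots> = (\<lambda>c. c) ` B" by (rule image_cong[OF refl]) (simp add: g)
    finally show ?thesis by simp
  qed
  have spPR: "VS.span Gs \<subseteq> PR_hom_polys m d" by (rule VS.span_minimal[OF GsPR subspace_PR])
  have inj: "inj_on (evc m d R) (VS.span Gs)" by (rule inj_on_subset[OF inj_PR[OF R d] spPR])
  have "VS.dim Gs = VS.dim (evc m d R ` Gs)" by (rule dim_image_eq_gen[OF linear_evc inj, symmetric])
  also have "\<dots> = card Gs" unfolding imG using VS.dim_eq_card_independent[OF B(2)] B(4) D(3) cGs by simp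
  finally have indep: "VS.independent Gs" by (rule indep_of_dim[OF finGs])
  have Z: "{P \<in> R. \<forall>G\<in>Gs. evh m d G P = 0} = R - Supp D"
  proof -
    have "(\<forall>G\<in>Gs. evh m d G P = 0) \<longleftrightarrow> P \<notin> Supp D" if P: "P \<in> R" for P
    proof -
      have "(\<forall>G\<in>Gs. evh m d G P = 0) \<longleftrightarrow> (\<forall>c\<in>B. c P = 0)"
      proof -
        have e: "evh m d (g c) P = c P" if "c \<in> B" for c
        proof -
          have "evc m d R (g c) P = c P" using g[OF that] by simp
          then show ?thesis using P by (simp add: evc_def)
        qed
        have "(\<forall>G\<in>Gs. evh m d G P = 0) \<longleftrightarrow> (\<forall>c\<in>B. evh m d (g c) P = 0)" unfolding Gs_def by simp
        also have "\<dots> \<longleftrightarrow> (\<forall>c\<in>B. c P = 0)" using e by simp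
        finally show ?thesis .
      qed
      also have "\<dots> \<longleftrightarrow> (\<forall>c\<in>D. c P = 0)"
      proof
        assume z: "\<forall>c\<in>B. c P = 0"
        have sub: "VS.subspace {c :: (nat \<Rightarrow> 'a) \<Rightarrow> 'a. c P = 0}"
          unfolding VS.subspace_def by simp
        have "VS.span B \<subseteq> {c. c P = 0}" using z by (intro VS.span_minimal[OF _ sub]) auto
        then show "\<forall>c\<in>D. c P = 0" using B(3) by blast
      next
        assume "\<forall>c\<in>D. c P = 0" then show "\<forall>c\<in>B. c P = 0" using B(1) by blast
      qed
      also have "\<dots> \<longleftrightarrow> P \<notin> Supp D" unfolding Supp_def by blast
      finally show ?thesis .
    qed
    then show ?thesis by blast
  qed
  have fS: "finite (Supp D)" using supp_sub[OF D(1)] finite_R[OF R] by (rule finite_subset)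
  have "card (R - Supp D) = card R - card (Supp D)" by (rule card_Diff_subset[OF fS supp_sub[OF D(1)]])
  moreover have "card (Supp D) \<le> card R" by (rule card_mono[OF finite_R[OF R] supp_sub[OF D(1)]])
  ultimately have "card (Supp D) = card R - card {P \<in> R. \<forall>G\<in>Gs. evh m d G P = 0}" unfolding Z by simp
  then show ?thesis using GsPR cGs indep by blast
qed

theorem lemma6p2:
  fixes R :: "(nat \<Rightarrow> 'a::{finite,field}) set" and m d r :: nat
  assumes "m \<ge> 1"
    and "rep_system m R"
    and "d \<ge> 1"
    and "1 \<le> r"
    and "r \<le> (m + d choose d) - r_d TYPE('a) m d"
  shows "gen_hamming_weight (PRM d m R) r = p_m CARD('a) m - e_bar TYPE('a) r d m"
proof -
  note R = assms(2) and d = assms(3)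
  define cond where "cond Gs \<longleftrightarrow> Gs \<subseteq> (PR_hom_polys m d :: ((nat \<Rightarrow> nat) \<Rightarrow> 'a) set) \<and> card Gs = r
      \<and> \<not> module.dependent (fscale :: 'a \<Rightarrow> _) Gs" for Gs
  define Zc where "Zc Gs = card {P \<in> R. \<forall>G\<in>Gs. evh m d G P = (0::'a)}" for Gs
  define E where "E = {card {L \<in> (proj_points m :: (nat \<Rightarrow> 'a) set set).
                                      \<forall>G\<in>Gs. \<forall>v\<in>L. eval_poly m G v = 0} | Gs. cond Gs}"
  define H where "H = {card (Supp D) | D. D \<subseteq> PRM d m R \<and> VS.subspace D \<and> VS.dim D = r}"
  have ebar: "e_bar TYPE('a) r d m = Max E" unfolding e_bar_def E_def cond_def by simp
  have ghw: "gen_hamming_weight (PRM d m R) r = Min H" unfolding gen_hamming_weight_def H_def by simp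
  have cardR: "card R = p_m CARD('a) m" by (rule card_R[OF R])
  have finR: "finite R" by (rule finite_R[OF R])
  have Ecard: "card {L \<in> (proj_points m :: (nat \<Rightarrow> 'a) set set). \<forall>G\<in>Gs. \<forall>v\<in>L. eval_poly m G v = 0} = Zc Gs"
    if "cond Gs" for Gs
  proof -
    have "Gs \<subseteq> hom_polys m d" using that PR_sub_hom unfolding cond_def by blast
    then show ?thesis unfolding Zc_def by (rule zeros_card[OF R d])
  qed
  have E_alt: "E = Zc ` {Gs. cond Gs}"
  proof -
    have "E = (\<lambda>Gs. card {L \<in> (proj_points m :: (nat \<Rightarrow> 'a) set set).
           \<forall>G\<in>Gs. \<forall>v\<in>L. eval_poly m G v = 0}) ` {Gs. cond Gs}"
      unfolding E_def by blast
    also have "\<dots> = Zc ` {Gs. cond Gs}" by (rule image_cong[OF refl]) (simp add: Ecard)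
    finally show ?thesis .
  qed
  have exG: "\<exists>Gs. cond Gs"
  proof -
    let ?P = "PR_hom_polys m d :: ((nat \<Rightarrow> nat) \<Rightarrow> 'a) set"
    have "r \<le> VS.dim ?P" using dim_PR_ge[where 'a='a, of m d] assms(4,5) by linarith
    obtain BP where BP: "BP \<subseteq> ?P" "VS.independent BP" "?P \<subseteq> VS.span BP" "card BP = VS.dim ?P"
      by (rule VS.basis_exists)
    have finBP: "finite BP" by (rule finite_subset[OF order.trans[OF BP(1) PR_sub_hom] finite_hom])
    obtain Gs where Gs: "Gs \<subseteq> BP" "card Gs = r"
      using obtain_subset_with_card_n[of r BP] \<open>r \<le> VS.dim ?P\<close> BP(4) by metis
    have "VS.independent Gs" by (rule VS.independent_mono[OF BP(2) Gs(1)])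
    then have "cond Gs" unfolding cond_def using Gs BP(1) by blast
    then show ?thesis by blast
  qed
  have finE: "finite E"
  proof -
    have "E \<subseteq> {..card R}"
    proof
      fix z assume "z \<in> E"
      then obtain Gs where "cond Gs" "z = Zc Gs" unfolding E_alt by blast
      moreover have "{P \<in> R. \<forall>G\<in>Gs. evh m d G P = 0} \<subseteq> R" by blast
      ultimately have "z \<le> card R" unfolding Zc_def using card_mono[OF finR] by simp
      then show "z \<in> {..card R}" by simp
    qed
    then show ?thesis by (rule finite_subset) simp
  qed
  have neE: "E \<noteq> {}" using exG unfolding E_alt by blast
  have finH: "finite H"
  proof -
    have "H \<subseteq> {..card R}"
    proof
      fix z assume "z \<in> H"
      then obtain D where D: "D \<subseteq> PRM d m R" "z = card (Supp D)" unfolding H_def by blast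
      then have "z \<le> card R" using card_mono[OF finR supp_sub[OF D(1)]] by simp
      then show "z \<in> {..card R}" by simp
    qed
    then show ?thesis by (rule finite_subset) simp
  qed
  obtain G0 where G0: "cond G0" "Max E = Zc G0"
  proof -
    have "Max E \<in> E" by (rule Max_in[OF finE neE])
    then show ?thesis using that unfolding E_alt by blast
  qed
  obtain D0 where D0: "D0 \<subseteq> PRM d m R" "VS.subspace D0" "VS.dim D0 = r" "card (Supp D0) = card R - Zc G0"
    using constr[OF R d, of G0 r] G0(1) unfolding cond_def Zc_def by blast
  have inH: "card R - Max E \<in> H" unfolding H_def G0(2)
    by (rule CollectI, rule exI[of _ D0]) (use D0 in simp)
  have le1: "Min H \<le> card R - Max E" by (rule Min_le[OF finH inH])
  have neH: "H \<noteq> {}" using inH by blast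
  have "Min H \<in> H" by (rule Min_in[OF finH neH])
  then obtain D where D: "D \<subseteq> PRM d m R" "VS.subspace D" "VS.dim D = r" "Min H = card (Supp D)"
    unfolding H_def by blast
  obtain Gs where Gs: "cond Gs" "card (Supp D) = card R - Zc Gs"
    using decon[OF R d D(1,2,3)] unfolding cond_def Zc_def by blast
  have "Zc Gs \<in> E" unfolding E_alt using Gs(1) by blast
  then have "Zc Gs \<le> Max E" by (rule Max_ge[OF finE])
  then have le2: "card R - Max E \<le> Min H" using D(4) Gs(2) by simp
  show ?thesis using le1 le2 ghw ebar cardR by simp
qed

end
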